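(* The Top-$t$ Truncated Harmonic rule has utilitarian distortion $O\!\left(\frac{m\sqrt m\,H_t}{t}\right)$.
   Context: Setting: $n$ agents, $m$ alternatives, $1\le t\le m$; each agent has an underlying strict ranking but only her ordered top-$t$ list is reported (top-$t$ profile $\vec\sigma_t$); $r_i(Y)\in\{1,\dots,t\}$ is the reported rank of $Y$ when $Y$ is among $i$'s top $t$; $H_t=\sum_{k=1}^t1/k$. For the reported information, $Y\succ_i\hat X$ holds when $Y$ is among $i$'s top $t$ and either $\hat X$ is not among them or $r_i(Y)<r_i(\hat X)$. Utilitarian framework: $u_i:\mathcal A\to\mathbb R_{\ge0}$ with $\sum_Xu_i(X)=1$; $\vec u$ is consistent with $\vec\sigma_t$ if for some full ranking profile whose top-$t$ prefixes agree with $\vec\sigma_t$, $X\succ_iY\Rightarrow u_i(X)\ge u_i(Y)$. $\mathrm{SW}(X,\vec u)=\sum_iu_i(X)$; utilitarian distortion of $f$: $\sup_{\vec\sigma_t}\sup_{\vec u}\max_X\mathrm{SW}(X,\vec u)/\mathbb E_{X\sim f(\vec\sigma_t)}[\mathrm{SW}(X,\vec u)]$. Top-$t$ Truncated Harmonic rule: fix a deterministic voting rule $g$ on top-$t$ profiles with metric distortion at most $6m/t+1$ (such a rule exists), and let $\hat X=g(\vec\sigma_t)$. Pick an agent $i$ uniformly at random and output $Y$ with probability $p(i,Y)=\frac{1}{2H_t r_i(Y)}$ if $Y\succ_i\hat X$, $p(i,\hat X)=1-\sum_{Y\succ_i\hat X}p(i,Y)$, and $p(i,Y)=0$ otherwise.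 *)

theory Defs
  imports "HOL-Analysis.Analysis"
begin

text \<open>Agents are 0..<n, alternatives are 0..<m (natural numbers).
  A ranking is a list of alternatives, most preferred first.\<close>

text \<open>0-based position of an element in a list (length l if absent).\<close>
fun index :: "nat list \<Rightarrow> nat \<Rightarrow> nat" where
  "index [] x = 0"
| "index (y # ys) x = (if y = x then 0 else Suc (index ys x))"

definition full_ranking :: "nat \<Rightarrow> nat list \<Rightarrow> bool" where
  "full_ranking m l \<longleftrightarrow> distinct l \<and> set l = {0..<m}"

definition top_list :: "nat \<Rightarrow> nat \<Rightarrow> nat list \<Rightarrow> bool" where
  "top_list m t l \<longleftrightarrow> distinct l \<and> length l = t \<and> set l \<subseteq> {0..<m}"

definition top_profile :: "nat \<Rightarrow> nat \<Rightarrow> nat \<Rightarrow> (nat \<Rightarrow> nat list) \<Rightarrow> bool" where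
  "top_profile n m t \<sigma> \<longleftrightarrow> (\<forall>i<n. top_list m t (\<sigma> i))"

definition extends_profile :: "nat \<Rightarrow> nat \<Rightarrow> nat \<Rightarrow> (nat \<Rightarrow> nat list) \<Rightarrow> (nat \<Rightarrow> nat list) \<Rightarrow> bool" where
  "extends_profile n m t \<sigma> \<rho> \<longleftrightarrow> (\<forall>i<n. full_ranking m (\<rho> i) \<and> take t (\<rho> i) = \<sigma> i)"

definition prefers :: "nat list \<Rightarrow> nat \<Rightarrow> nat \<Rightarrow> bool" where
  "prefers l X Y \<longleftrightarrow> X \<in> set l \<and> Y \<in> set l \<and> index l X < index l Y"

text \<open>Reported rank r_i(Y) in {1..t} (meaningful when Y is in the top-t list).\<close>
definition rnk :: "nat list \<Rightarrow> nat \<Rightarrow> nat" where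
  "rnk l Y = index l Y + 1"

definition rep_prefers :: "nat list \<Rightarrow> nat \<Rightarrow> nat \<Rightarrow> bool" where
  "rep_prefers l Y X \<longleftrightarrow> Y \<in> set l \<and> (X \<notin> set l \<or> rnk l Y < rnk l X)"

definition unit_sum_utils :: "nat \<Rightarrow> nat \<Rightarrow> (nat \<Rightarrow> nat \<Rightarrow> real) \<Rightarrow> bool" where
  "unit_sum_utils n m u \<longleftrightarrow> (\<forall>i<n. (\<forall>X<m. u i X \<ge> 0) \<and> (\<Sum>X<m. u i X) = 1)"

definition util_consistent :: "nat \<Rightarrow> nat \<Rightarrow> nat \<Rightarrow> (nat \<Rightarrow> nat list) \<Rightarrow> (nat \<Rightarrow> nat \<Rightarrow> real) \<Rightarrow> bool" where
  "util_consistent n m t \<sigma> u \<longleftrightarrow> unit_sum_utils n m u \<and>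
     (\<exists>\<rho>. extends_profile n m t \<sigma> \<rho> \<and>
        (\<forall>i<n. \<forall>X<m. \<forall>Y<m. prefers (\<rho> i) X Y \<longrightarrow> u i X \<ge> u i Y))"

definition SW :: "nat \<Rightarrow> (nat \<Rightarrow> nat \<Rightarrow> real) \<Rightarrow> nat \<Rightarrow> real" where
  "SW n u X = (\<Sum>i<n. u i X)"

text \<open>A pseudometric on agents (Inl i) and alternatives (Inr X).\<close>
definition pseudometric_on :: "(nat + nat) set \<Rightarrow> ((nat + nat) \<Rightarrow> (nat + nat) \<Rightarrow> real) \<Rightarrow> bool" where
  "pseudometric_on S d \<longleftrightarrow> (\<forall>x\<in>S. d x x = 0) \<and> (\<forall>x\<in>S. \<forall>y\<in>S. d x y \<ge> 0 \<and> d x y = d y x) \<and>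
     (\<forall>x\<in>S. \<forall>y\<in>S. \<forall>z\<in>S. d x z \<le> d x y + d y z)"

definition metric_consistent :: "nat \<Rightarrow> nat \<Rightarrow> nat \<Rightarrow> (nat \<Rightarrow> nat list) \<Rightarrow> ((nat + nat) \<Rightarrow> (nat + nat) \<Rightarrow> real) \<Rightarrow> bool" where
  "metric_consistent n m t \<sigma> d \<longleftrightarrow> pseudometric_on (Inl ` {0..<n} \<union> Inr ` {0..<m}) d \<and>
     (\<exists>\<rho>. extends_profile n m t \<sigma> \<rho> \<and>
        (\<forall>i<n. \<forall>X<m. \<forall>Y<m. prefers (\<rho> i) X Y \<longrightarrow> d (Inl i) (Inr X) \<le> d (Inl i) (Inr Y)))"

definition SC :: "nat \<Rightarrow> ((nat + nat) \<Rightarrow> (nat + nat) \<Rightarrow> real) \<Rightarrow> nat \<Rightarrow> real" where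
  "SC n d X = (\<Sum>i<n. d (Inl i) (Inr X))"

definition det_rule :: "nat \<Rightarrow> nat \<Rightarrow> nat \<Rightarrow> ((nat \<Rightarrow> nat list) \<Rightarrow> nat) \<Rightarrow> bool" where
  "det_rule n m t g \<longleftrightarrow> (\<forall>\<sigma>. top_profile n m t \<sigma> \<longrightarrow> g \<sigma> < m)"

text \<open>Metric distortion of g is at most c (sup of SC(g)/SC(X) \<le> c, written multiplicatively).\<close>
definition metric_distortion_le :: "nat \<Rightarrow> nat \<Rightarrow> nat \<Rightarrow> ((nat \<Rightarrow> nat list) \<Rightarrow> nat) \<Rightarrow> real \<Rightarrow> bool" where
  "metric_distortion_le n m t g c \<longleftrightarrow>
     (\<forall>\<sigma> d. top_profile n m t \<sigma> \<longrightarrow> metric_consistent n m t \<sigma> d \<longrightarrow>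
        (\<forall>X<m. SC n d (g \<sigma>) \<le> c * SC n d X))"

definition TH_p :: "nat \<Rightarrow> ((nat \<Rightarrow> nat list) \<Rightarrow> nat) \<Rightarrow> (nat \<Rightarrow> nat list) \<Rightarrow> nat \<Rightarrow> nat \<Rightarrow> real" where
  "TH_p t g \<sigma> i Y =
     (let Xh = g \<sigma>; l = \<sigma> i in
      if rep_prefers l Y Xh then 1 / (2 * harm t * real (rnk l Y))
      else if Y = Xh then
        1 - (\<Sum>Z\<in>{Z\<in>set l. rep_prefers l Z Xh}. 1 / (2 * harm t * real (rnk l Z)))
      else 0)"

text \<open>Probability that the rule outputs Y: uniform agent i, then Y w.p. TH_p.\<close>
definition TH_prob :: "nat \<Rightarrow> nat \<Rightarrow> ((nat \<Rightarrow> nat list) \<Rightarrow> nat) \<Rightarrow> (nat \<Rightarrow> nat list) \<Rightarrow> nat \<Rightarrow> real" where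
  "TH_prob n t g \<sigma> Y = (\<Sum>i<n. TH_p t g \<sigma> i Y) / real n"

definition TH_expected_SW :: "nat \<Rightarrow> nat \<Rightarrow> nat \<Rightarrow> ((nat \<Rightarrow> nat list) \<Rightarrow> nat) \<Rightarrow> (nat \<Rightarrow> nat list) \<Rightarrow> (nat \<Rightarrow> nat \<Rightarrow> real) \<Rightarrow> real" where
  "TH_expected_SW n m t g \<sigma> u = (\<Sum>Y<m. TH_prob n t g \<sigma> Y * SW n u Y)"

end

theory Submission
  imports Defs
begin


lemma index_lt: "x \<in> set l \<Longrightarrow> index l x < length l"
  by (induct l) auto

lemma nth_index: "x \<in> set l \<Longrightarrow> l ! index l x = x"
  by (induct l) auto

lemma index_nth: "distinct l \<Longrightarrow> j < length l \<Longrightarrow> index l (l!j) = j"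
proof (induct l arbitrary: j)
  case Nil then show ?case by simp
next
  case (Cons a l)
  show ?case
  proof (cases j)
    case 0 then show ?thesis by simp
  next
    case (Suc k)
    with Cons have "l ! k \<noteq> a" "k < length l" using nth_mem by fastforce+
    with Cons Suc show ?thesis by simp
  qed
qed

lemma in_take_iff: "x \<in> set l \<Longrightarrow> (x \<in> set (take t l)) = (index l x < t)"
proof (induct l arbitrary: t)
  case Nil then show ?case by simp
next
  case (Cons a l) then show ?case by (cases t) auto
qed

lemma index_take: "x \<in> set l \<Longrightarrow> index l x < t \<Longrightarrow> index (take t l) x = index l x"
proof (induct l arbitrary: t)
  case Nil then show ?case by simp
next
  case (Cons a l) then show ?case by (cases t) auto
qed

lemma fr_length: "full_ranking m l \<Longrightarrow> length l = m"
  unfolding full_ranking_def using distinct_card by fastforce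

lemma fr_sum: assumes "full_ranking m l"
  shows "(\<Sum>Y<m. f Y) = (\<Sum>j<m. f (l!j))"
proof -
  have len: "length l = m" using fr_length[OF assms] .
  have d: "distinct l" and s: "set l = {0..<m}" using assms unfolding full_ranking_def by auto
  have "bij_betw (\<lambda>j. l!j) {..<m} {..<m}"
    unfolding bij_betw_def
  proof
    show "inj_on ((!) l) {..<m}" using d len by (simp add: inj_on_def nth_eq_iff_index_eq)
    show "(!) l ` {..<m} = {..<m}" proof -
      have "(!) l ` {..<length l} = set l" by (auto simp: set_conv_nth)
      then show ?thesis using s len by (simp add: atLeast0LessThan)
    qed 
  qed
  then show ?thesis by (simp add: sum.reindex_bij_betw)
qed

locale agent =
  fixes m :: nat and l :: "nat list" and v :: "nat \<Rightarrow> real"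
  assumes fr: "full_ranking m l"
    and nn: "\<And>Y. Y < m \<Longrightarrow> v Y \<ge> 0"
    and s1: "(\<Sum>Y<m. v Y) = 1"
    and mono: "\<And>X Y. X < m \<Longrightarrow> Y < m \<Longrightarrow> prefers l X Y \<Longrightarrow> v X \<ge> v Y"
begin

lemma len: "length l = m" using fr_length[OF fr] .
lemma dist: "distinct l" using fr unfolding full_ranking_def by auto
lemma setl: "set l = {0..<m}" using fr unfolding full_ranking_def by auto

lemma nth_lt: "j < m \<Longrightarrow> l!j < m"
  using setl len nth_mem by fastforce

lemma idx_lt: "Y < m \<Longrightarrow> index l Y < m"
  using index_lt[of Y l] setl len by auto

lemma nth_idx: "Y < m \<Longrightarrow> l ! index l Y = Y"
  using nth_index[of Y l] setl by auto

lemma idx_nth: "j < m \<Longrightarrow> index l (l!j) = j"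
  using index_nth[OF dist] len by auto

lemma mono_pos: "j \<le> k \<Longrightarrow> k < m \<Longrightarrow> v (l!j) \<ge> v (l!k)"
proof (cases "j = k")
  case False
  assume a: "j \<le> k" "k < m"
  with False have "prefers l (l!j) (l!k)"
    unfolding prefers_def using idx_nth len by (simp add: nth_mem)
  then show ?thesis using mono nth_lt a by simp
qed simp

lemma sum_pos: "(\<Sum>Y<m. f Y) = (\<Sum>j<m. f (l!j))"
  using fr_sum[OF fr] .

lemma s1': "(\<Sum>j<m. v (l!j)) = 1" using s1 sum_pos[of v] by simp

lemma nn': "j < m \<Longrightarrow> v (l!j) \<ge> 0" using nn nth_lt by simp

lemma rank_bound: assumes "Y < m" shows "v Y * real (index l Y + 1) \<le> 1"
proof -
  define p where "p = index l Y"
  have p: "p < m" "l!p = Y" using assms idx_lt nth_idx p_def by auto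
  have "(\<Sum>j<Suc p. v (l!j)) \<le> (\<Sum>j<m. v (l!j))"
    using p by (intro sum_mono2) (auto intro: nn')
  moreover have "(\<Sum>j<Suc p. v Y) \<le> (\<Sum>j<Suc p. v (l!j))"
    using p by (intro sum_mono) (metis lessThan_iff less_Suc_eq_le mono_pos)
  ultimately show ?thesis using s1' p_def by (simp add: mult.commute)
qed

lemma top_bound: assumes "0 < m" shows "1 \<le> real m * v (l!0)"
proof -
  have "(\<Sum>j<m. v (l!j)) \<le> (\<Sum>j<m. v (l!0))"
    by (intro sum_mono) (simp add: mono_pos)
  then show ?thesis using s1' by simp
qed

end


lemma split_sum: "k \<le> (m::nat) \<Longrightarrow> (\<Sum>j<m. f j) = (\<Sum>j<k. f j) + (\<Sum>j\<in>{k..<m}. f j)"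
proof -
  assume k: "k \<le> m"
  have "{..<m} = {..<k} \<union> {k..<m}" using k by auto
  then show ?thesis by (simp add: sum.union_disjoint ivl_disj_int)
qed

lemma if_sum: "k \<le> (m::nat) \<Longrightarrow> (\<Sum>j<m. if j < k then f j else 0) = (\<Sum>j<k. f j)"
proof -
  assume k: "k \<le> m"
  then have "{..<m} \<inter> {j. j < k} = {..<k}" using k by auto
  then show ?thesis by (simp add: sum.If_cases)
qed

context agent begin

definition beta :: "nat \<Rightarrow> nat \<Rightarrow> real" where
  "beta t Xh = (\<Sum>j<m. if j < t \<and> j < index l Xh then v (l!j) else 0)"

lemma beta_nn: "beta t Xh \<ge> 0"
  unfolding beta_def by (intro sum_nonneg) (auto intro: nn')

lemma e_bound: assumes t: "1 \<le> t" "t \<le> m" and xh: "Xh < m"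
  shows "1 \<le> (real m / real t) * beta t Xh + real m * v Xh"
proof -
  define q where "q = index l Xh"
  have q: "q < m" "l!q = Xh" using xh idx_lt nth_idx q_def by auto
  have mt: "real m / real t \<ge> 1" using t by simp
  show ?thesis
  proof (cases "q < t")
    case True
    have "beta t Xh = (\<Sum>j<m. if j < q then v (l!j) else 0)"
      unfolding beta_def q_def[symmetric] using True by (intro sum.cong) auto
    then have b: "beta t Xh = (\<Sum>j<q. v (l!j))" using if_sum[of q m] q by simp
    have "(\<Sum>j\<in>{q..<m}. v (l!j)) \<le> (\<Sum>j\<in>{q..<m}. v Xh)"
      using q by (intro sum_mono) (metis atLeastLessThan_iff mono_pos)
    also have "\<dots> \<le> real m * v Xh" using q nn[OF xh] by (simp add: mult_right_mono)
    finally have "1 \<le> beta t Xh + real m * v Xh"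
      using s1' split_sum[of q m "\<lambda>j. v (l!j)"] q b by linarith
    moreover have "beta t Xh \<le> (real m / real t) * beta t Xh"
      using mult_right_mono[OF mt beta_nn] by simp
    ultimately show ?thesis by linarith
  next
    case False
    have "beta t Xh = (\<Sum>j<m. if j < t then v (l!j) else 0)"
      unfolding beta_def q_def[symmetric] using False by (intro sum.cong) auto
    then have b: "beta t Xh = (\<Sum>j<t. v (l!j))" using if_sum[of t m] t by simp
    define a where "a = v (l!(t-1))"
    have "(\<Sum>j<t. a) \<le> (\<Sum>j<t. v (l!j))"
      unfolding a_def using t by (intro sum_mono mono_pos) auto
    then have ba: "real t * a \<le> beta t Xh" using b by simp
    have "(\<Sum>j\<in>{t..<m}. v (l!j)) \<le> (\<Sum>j\<in>{t..<m}. a)"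
      unfolding a_def using t by (intro sum_mono mono_pos) auto
    then have ra: "(\<Sum>j\<in>{t..<m}. v (l!j)) \<le> real (m - t) * a" by simp
    have one: "1 = beta t Xh + (\<Sum>j\<in>{t..<m}. v (l!j))"
      using s1' split_sum[of t m "\<lambda>j. v (l!j)"] t b by linarith
    have a0: "a \<ge> 0" unfolding a_def using t nn' by simp
    have "real (m - t) * a \<le> real (m - t) * (beta t Xh / real t)"
      using ba t by (intro mult_left_mono) (auto simp: field_simps)
    also have "\<dots> = (real m / real t - 1) * beta t Xh" using t by (simp add: field_simps of_nat_diff)
    finally have "1 \<le> (real m / real t) * beta t Xh" using one ra by (simp add: algebra_simps)
    moreover have "real m * v Xh \<ge> 0" using nn[OF xh] by simp
    ultimately show ?thesis by linarith
  qed
qed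

lemma a1_bound: assumes x: "X < m" and xh: "Xh < m"
  and nb: "\<not> (index l X < t \<and> index l X < index l Xh)" and gt: "v X > v Xh"
  shows "real t * v X \<le> beta t Xh"
proof -
  define p where "p = index l X"
  define q where "q = index l Xh"
  have p: "p < m" "l!p = X" using x idx_lt nth_idx p_def by auto
  have q: "q < m" "l!q = Xh" using xh idx_lt nth_idx q_def by auto
  have "\<not> q \<le> p" using mono_pos[of q p] p q gt by auto
  then have pq: "p < q" by simp
  have pt: "t \<le> p" using nb pq p_def q_def by auto
  have "beta t Xh = (\<Sum>j<m. if j < t then v (l!j) else 0)"
    unfolding beta_def q_def[symmetric] using pt pq by (intro sum.cong) auto
  then have b: "beta t Xh = (\<Sum>j<t. v (l!j))" using if_sum[of t m] pt p by simp
  have "(\<Sum>j<t. v X) \<le> (\<Sum>j<t. v (l!j))"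
  proof (intro sum_mono)
    fix j assume "j \<in> {..<t}"
    then have "j \<le> p" using pt by simp
    then show "v X \<le> v (l!j)" using mono_pos[of j p] p by simp
  qed
  then show ?thesis using b by simp
qed

end


context agent begin

lemma rep_iff: assumes y: "Y < m" and xh: "Xh < m" and tm: "t \<le> m"
  shows "rep_prefers (take t l) Y Xh \<longleftrightarrow> index l Y < t \<and> index l Y < index l Xh"
proof -
  have yl: "Y \<in> set l" and xl: "Xh \<in> set l" using y xh setl by auto
  show ?thesis
    unfolding rep_prefers_def rnk_def
    using in_take_iff[OF yl, of t] in_take_iff[OF xl, of t] index_take[OF yl, of t] index_take[OF xl, of t]
    by auto
qed

lemma sum_half: assumes tm: "1 \<le> t" "t \<le> m"
  shows "(\<Sum>Z\<in>{Z\<in>set (take t l). rep_prefers (take t l) Z Xh}. 1 / (2 * harm t * real (rnk (take t l) Z))) \<le> 1/2"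
proof -
  have H: "harm t > (0::real)" using tm by simp
  have le1: "(\<Sum>Z\<in>{Z\<in>set (take t l). rep_prefers (take t l) Z Xh}. 1 / (2 * harm t * real (rnk (take t l) Z)))
     \<le> (\<Sum>Z\<in>set (take t l). 1 / (2 * harm t * real (rnk (take t l) Z)))"
    using H by (intro sum_mono2) (auto intro!: mult_nonneg_nonneg harm_nonneg)
  have st: "set (take t l) = (!) l ` {..<t}" using nth_image[of t l] tm len by (simp add: lessThan_atLeast0)
  have "(\<Sum>Z\<in>set (take t l). 1 / (2 * harm t * real (rnk (take t l) Z)))
      = (\<Sum>j<t. 1 / (2 * harm t * real (rnk (take t l) (l!j))))"
    unfolding st
  proof (rule sum.reindex[unfolded comp_def])
    show "inj_on ((!) l) {..<t}" using dist len tm by (simp add: inj_on_def nth_eq_iff_index_eq)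
  qed
  also have "(\<Sum>j<t. 1 / (2 * harm t * real (rnk (take t l) (l!j)))) = (\<Sum>j<t. 1 / (2 * harm t) * inverse (real (Suc j)))"
  proof (intro sum.cong refl)
    fix j assume j: "j \<in> {..<t}"
    then have jm: "j < m" using tm by simp
    have "l!j \<in> set l" using jm len by simp
    then have "index (take t l) (l!j) = j" using index_take[of "l!j" l t] idx_nth[OF jm] j by simp
    then show "1 / (2 * harm t * real (rnk (take t l) (l!j))) = 1 / (2 * harm t) * inverse (real (Suc j))"
      unfolding rnk_def by (simp add: field_simps)
  qed
  also have "\<dots> = 1 / (2 * harm t) * harm t"
    by (simp add: harm_altdef sum_distrib_left)
  also have "\<dots> = 1/2" using H by (metis less_irrefl mult.commute nonzero_divide_mult_cancel_left times_divide_eq_left mult_1 divide_self_if)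
  finally show ?thesis using le1 by linarith
qed

lemma thp_facts:
  assumes si: "\<sigma> i = take t l" and gx: "g \<sigma> = Xh" and xh: "Xh < m" and tm: "1 \<le> t" "t \<le> m"
  shows thp_nn: "TH_p t g \<sigma> i Y \<ge> 0"
    and thp_xh: "TH_p t g \<sigma> i Xh \<ge> 1/2"
    and thp_b: "Y < m \<Longrightarrow> index l Y < t \<Longrightarrow> index l Y < index l Xh \<Longrightarrow> TH_p t g \<sigma> i Y \<ge> v Y / (2 * harm t)"
    and thp_top: "TH_p t g \<sigma> i (l!0) \<ge> 1 / (2 * harm t)"
proof -
  have H: "harm t > (0::real)" using tm by simp
  have H1: "harm t \<ge> (1::real)" using harm_mono[of 1 t] tm by (simp add: harm_def)
  note sh = sum_half[OF tm, of Xh]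
  have rxx: "\<not> rep_prefers (take t l) Xh Xh" unfolding rep_prefers_def by auto
  show xx: "TH_p t g \<sigma> i Xh \<ge> 1/2"
    unfolding TH_p_def Let_def si gx using rxx sh by simp
  show "TH_p t g \<sigma> i Y \<ge> 0"
    unfolding TH_p_def Let_def si gx using sh H by (auto simp: rnk_def intro!: mult_nonneg_nonneg harm_nonneg)
  show "Y < m \<Longrightarrow> index l Y < t \<Longrightarrow> index l Y < index l Xh \<Longrightarrow> TH_p t g \<sigma> i Y \<ge> v Y / (2 * harm t)"
  proof -
    assume y: "Y < m" "index l Y < t" "index l Y < index l Xh"
    then have r: "rep_prefers (take t l) Y Xh" using rep_iff[OF y(1) xh tm(2)] by simp
    have rk: "rnk (take t l) Y = index l Y + 1"
      unfolding rnk_def using index_take[of Y l t] y setl by auto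
    have "v Y * real (index l Y + 1) \<le> 1" using rank_bound[OF y(1)] .
    then have "v Y \<le> 1 / real (index l Y + 1)" by (simp add: pos_le_divide_eq)
    then have "v Y / (2 * harm t) \<le> (1 / real (index l Y + 1)) / (2 * harm t)"
      using harm_nonneg[of t] by (intro divide_right_mono) auto
    then have "v Y / (2 * harm t) \<le> 1 / (2 * harm t * real (index l Y + 1))"
      by (simp add: mult.commute)
    then show ?thesis unfolding TH_p_def Let_def si gx using r rk by simp
  qed
  show "TH_p t g \<sigma> i (l!0) \<ge> 1 / (2 * harm t)"
  proof (cases "l!0 = Xh")
    case True
    have "1 / (2 * harm t) \<le> (1/(2*1)::real)" by (rule divide_left_mono) (use H1 tm in auto)
    then show ?thesis using True xx by simp
  next
    case False
    have m0: "0 < m" using tm by simp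
    have ix: "index l Xh \<noteq> 0" using False nth_idx[OF xh] by (metis)
    have r: "rep_prefers (take t l) (l!0) Xh"
      using rep_iff[OF nth_lt[OF m0] xh tm(2)] idx_nth[OF m0] ix tm by simp
    have rk: "rnk (take t l) (l!0) = 1"
      unfolding rnk_def using index_take[of "l!0" l t] idx_nth[OF m0] tm m0 len by simp
    show ?thesis unfolding TH_p_def Let_def si gx using r rk by simp
  qed
qed

end




lemma sq_le_imp: "(a::real) \<ge> 0 \<Longrightarrow> b \<ge> 0 \<Longrightarrow> a^2 \<le> b^2 \<Longrightarrow> a \<le> b"
  using power2_le_imp_le by blast

lemma final_alg:
  fixes S s w y E n m t H :: real
  assumes n: "n > 0" and t: "t \<ge> 1" "t \<le> m" and H: "H \<ge> 1"
    and nn: "S \<ge> 0" "s \<ge> 0" "w \<ge> 0" "y \<ge> 0" "E \<ge> 0"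
    and a: "s \<le> 2 * E"
    and b: "y * S \<le> 2 * H * n * E"
    and c: "w^2 \<le> 2 * H * n * m * E"
    and d: "n \<le> 2 * H * m^2 * E"
    and e: "n \<le> (m/t) * w + m * s"
    and f: "S \<le> s + w/t + y"
  shows "S \<le> 8 * (m * sqrt m * H/t) * E"
proof -
  define r where "r = sqrt m"
  have m0: "m > 0" using t by simp
  have r: "r > 0" "r^2 = m" "r \<ge> 1" using m0 t by (auto simp: r_def)
  define K where "K = m * r * H/t"
  have K: "K \<ge> 1"
  proof -
    have "t \<le> m * r * H" using t r H
      by (metis mult_le_cancel_left1 mult_mono' dual_order.trans less_le_not_le mult.commute m0 mult_nonneg_nonneg zero_le_one)
    then show ?thesis unfolding K_def using t by simp
  qed
  have th1: "w^2 \<le> (2 * H * m * r * E)^2"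
  proof -
    have "w^2 \<le> 2 * H * m * E * n" using c by (simp add: algebra_simps)
    also have "\<dots> \<le> 2 * H * m * E * (2 * H * m^2 * E)" using d H m0 nn by (intro mult_left_mono) auto
    also have "\<dots> = (2 * H * m * r * E)^2" using r by (simp add: power2_eq_square algebra_simps)
    finally show ?thesis .
  qed
  have th2: "w \<le> 2 * H * m * r * E" using sq_le_imp[OF nn(3) _ th1] H r m0 nn by simp
  have th3: "w/t \<le> 2 * (K * E)" using th2 t unfolding K_def by (simp add: field_simps)
  have nb: "n * t^2 \<le> 8 * H * m^3 * E"
  proof (cases "s \<ge> n/(2 * m)")
    case True
    then have "n \<le> 2 * m * s" using m0 by (simp add: field_simps)
    moreover have "m * s \<le> m * (2 * E)" using a m0 by (intro mult_left_mono) auto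
    ultimately have "n \<le> 4 * m * E" by linarith
    moreover have "t^2 \<le> 2 * H * m^2"
    proof -
      have "t^2 \<le> m^2" using t by (intro power_mono) auto
      moreover have "1 * m^2 \<le> (2 * H) * m^2" using H by (intro mult_right_mono) auto
      ultimately show ?thesis by simp
    qed
    ultimately have "n * t^2 \<le> (4 * m * E) * (2 * H * m^2)"
      using n nn m0 by (intro mult_mono) auto
    then show ?thesis by (simp add: power2_eq_square power3_eq_cube algebra_simps)
  next
    case False
    then have "m * s < n/2" using m0 by (simp add: field_simps)
    then have "n/2 \<le> (m/t) * w" using e by linarith
    then have "n * t \<le> 2 * m * w" using t by (simp add: field_simps)
    then have "(n * t)^2 \<le> (2 * m * w)^2" using n t by (intro power_mono) auto
    also have "\<dots> = 4 * m^2 * w^2" by (simp add: power2_eq_square)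
    also have "\<dots> \<le> 4 * m^2 * (2 * H * n * m * E)" using c m0 by (intro mult_left_mono) auto
    finally have "n * (n * t^2) \<le> n * (8 * H * m^3 * E)" by (simp add: power2_eq_square power3_eq_cube algebra_simps)
    then show ?thesis using n by simp
  qed
  show ?thesis
  proof (cases "S \<le> 2 * (s + w/t)")
    case True
    then have "S \<le> 4 * E + 4 * (K * E)" using a th3 by (smt (verit))
    also have "\<dots> \<le> 8 * K * E" using mult_right_mono[OF K nn(5)] by (simp add: mult.commute)
    finally show ?thesis unfolding K_def r_def by simp
  next
    case False
    then have yS: "S \<le> 2 * y" using f by (smt (verit))
    then have "S^2 \<le> 2 * y * S" using nn by (simp add: power2_eq_square mult_right_mono)
    also have "\<dots> \<le> 4 * H * n * E" using b by linarith
    finally have s2: "S^2 \<le> 4 * H * n * E" .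
    have "S^2 * t^2 \<le> (4 * H * n * E) * t^2" using s2 by (rule mult_right_mono) simp
    also have "\<dots> = 4 * H * E * (n * t^2)" by (simp add: ac_simps)
    also have "\<dots> \<le> 4 * H * E * (8 * H * m^3 * E)"
      by (rule mult_left_mono[OF nb]) (use H nn in simp)
    also have "\<dots> = 32 * H^2 * m^2 * m * E^2" by (simp add: power2_eq_square power3_eq_cube ac_simps)
    also have "\<dots> = (sqrt 32 * H * m * r * E)^2"
    proof -
      have "(sqrt 32 * H * m * r * E)^2 = (sqrt 32)^2 * H^2 * m^2 * r^2 * E^2" by (simp only: power_mult_distrib)
      then show ?thesis using r(2) by (simp add: ac_simps)
    qed
    finally have "(S * t)^2 \<le> (sqrt 32 * H * m * r * E)^2" by (simp only: power_mult_distrib)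
    then have st: "S * t \<le> sqrt 32 * H * m * r * E"
    proof (rule sq_le_imp[rotated 2])
      show "0 \<le> S * t" using nn t by simp
      show "0 \<le> sqrt 32 * H * m * r * E" using nn H r m0 by simp
    qed
    have "sqrt 32 \<le> sqrt (8^2)" by (intro real_sqrt_le_mono) simp
    then have s8: "sqrt 32 \<le> (8::real)" by simp
    have hm: "H * m * r * E \<ge> 0" using H r m0 nn by simp
    have "sqrt 32 * (H * m * r * E) \<le> 8 * (H * m * r * E)"
      using s8 hm by (rule mult_right_mono)
    then have "S * t \<le> 8 * (H * m * r * E)" using st by (simp only: mult.assoc)
    then have "S \<le> 8 * (H * m * r * E) / t" using t by (simp add: pos_le_divide_eq)
    moreover have "8 * (H * m * r * E) / t = 8 * (m * sqrt m * H / t) * E" unfolding r_def by (simp add: ac_simps)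
    ultimately show ?thesis by simp
  qed
qed




lemma cs_lemma:
  fixes q f W :: "nat \<Rightarrow> real"
  assumes qa: "\<And>Y. Y < m \<Longrightarrow> q Y \<ge> a * W Y" and fb: "\<And>Y. Y < m \<Longrightarrow> f Y \<ge> b * W Y"
    and W0: "\<And>Y. Y < m \<Longrightarrow> W Y \<ge> 0" and a: "a \<ge> 0" and b: "b \<ge> 0" and m: "m > 0"
  shows "a * b * (\<Sum>Y<m. W Y)^2 / real m \<le> (\<Sum>Y<m. q Y * f Y)"
proof -
  have "(\<Sum>Y<m. W Y)^2 \<le> (\<Sum>Y<m. (W Y)^2) * real m"
    using sum_squared_le_sum_of_squares[of W "{..<m}"] by simp
  then have "a * b * (\<Sum>Y<m. W Y)^2 / real m \<le> a * b * (\<Sum>Y<m. (W Y)^2)"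
    using a b m by (simp add: divide_le_eq mult_left_mono mult.assoc)
  also have "\<dots> = (\<Sum>Y<m. (a * W Y) * (b * W Y))"
    by (simp add: sum_distrib_left power2_eq_square ac_simps)
  also have "\<dots> \<le> (\<Sum>Y<m. q Y * f Y)"
  proof (intro sum_mono)
    fix Y assume "Y \<in> {..<m}"
    then have Y: "Y < m" by simp
    show "(a * W Y) * (b * W Y) \<le> q Y * f Y"
    proof (rule mult_mono)
      have "0 \<le> a * W Y" using W0[OF Y] a by simp
      then show "0 \<le> q Y" using qa[OF Y] by linarith
    qed (use qa[OF Y] fb[OF Y] W0[OF Y] a b in auto)
  qed
  finally show ?thesis .
qed

context agent begin

lemma beta_alt: "beta t Xh = (\<Sum>Y<m. if index l Y < t \<and> index l Y < index l Xh then v Y else 0)"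
  unfolding beta_def sum_pos[of "\<lambda>Y. if index l Y < t \<and> index l Y < index l Xh then v Y else 0"]
  by (intro sum.cong) (auto simp: idx_nth)

end




theorem mainTheorem13:
  "\<exists>C::real. \<forall>n m t g \<sigma> u X.
     1 \<le> n \<longrightarrow> 1 \<le> t \<longrightarrow> t \<le> m \<longrightarrow>
     det_rule n m t g \<longrightarrow>
     metric_distortion_le n m t g (6 * real m / real t + 1) \<longrightarrow>
     top_profile n m t \<sigma> \<longrightarrow> util_consistent n m t \<sigma> u \<longrightarrow> X < m \<longrightarrow>
     SW n u X \<le> C * (real m * sqrt (real m) * harm t / real t) * TH_expected_SW n m t g \<sigma> u"
proof (intro exI[of _ 8] allI impI)
  fix n m t g \<sigma> u X
  assume n1: "1 \<le> n" and t1: "1 \<le> t" and tm: "t \<le> m" and dr: "det_rule n m t g"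
    and md: "metric_distortion_le n m t g (6 * real m / real t + 1)"
    and tp: "top_profile n m t \<sigma>" and uc: "util_consistent n m t \<sigma> u" and x: "X < m"
  have us: "unit_sum_utils n m u" using uc unfolding util_consistent_def by auto
  obtain \<rho> where ext: "extends_profile n m t \<sigma> \<rho>"
    and mon: "\<And>i X Y. i < n \<Longrightarrow> X < m \<Longrightarrow> Y < m \<Longrightarrow> prefers (\<rho> i) X Y \<Longrightarrow> u i X \<ge> u i Y"
    using uc unfolding util_consistent_def by blast
  define Xh where "Xh = g \<sigma>"
  have xh: "Xh < m" using dr tp unfolding det_rule_def Xh_def by auto
  have m0: "0 < m" using t1 tm by simp
  have ag: "agent m (\<rho> i) (u i)" if i: "i < n" for i
    unfolding agent_def using ext us mon i unfolding extends_profile_def unit_sum_utils_def by auto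
  have si: "\<sigma> i = take t (\<rho> i)" if i: "i < n" for i
    using ext i unfolding extends_profile_def by auto
  have unn: "u i Y \<ge> 0" if "i < n" "Y < m" for i Y using us that unfolding unit_sum_utils_def by auto
  define H where "H = (harm t :: real)"
  have H1: "H \<ge> 1" unfolding H_def using harm_mono[of 1 t] t1 by (simp add: harm_def)
  have Hp: "H > 0" using H1 by simp
  define q where "q Y = TH_prob n t g \<sigma> Y" for Y
  define E where "E = TH_expected_SW n m t g \<sigma> u"
  define P where "P i Y = TH_p t g \<sigma> i Y" for i Y
  have Pnn: "P i Y \<ge> 0" if "i < n" for i Y
    unfolding P_def using agent.thp_nn[where \<sigma>=\<sigma> and i=i and g=g and t=t and Xh=Xh, OF ag[OF that] si[OF that] Xh_def[symmetric] xh t1 tm] .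
  have nr: "real n > 0" using n1 by simp
  have qdef: "q Y = (\<Sum>i<n. P i Y) / real n" for Y unfolding q_def P_def TH_prob_def by simp
  have qnn: "q Y \<ge> 0" for Y unfolding qdef using Pnn by (intro divide_nonneg_nonneg sum_nonneg) auto
  have SWnn: "SW n u Y \<ge> 0" if "Y < m" for Y unfolding SW_def using unn that by (intro sum_nonneg) auto
  have Edef: "E = (\<Sum>Y<m. q Y * SW n u Y)" unfolding E_def TH_expected_SW_def q_def by simp
  have Ege: "E \<ge> q Y * SW n u Y" if "Y < m" for Y
    unfolding Edef using that qnn SWnn by (intro member_le_sum) auto
  have Enn: "E \<ge> 0" unfolding Edef using qnn SWnn by (intro sum_nonneg) auto
  have qxh: "q Xh \<ge> 1/2"
  proof -
    have "(\<Sum>i<n. (1/2::real)) \<le> (\<Sum>i<n. P i Xh)"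
    proof (intro sum_mono)
      fix i assume "i \<in> {..<n}"
      then have i: "i < n" by simp
      show "1/2 \<le> P i Xh" unfolding P_def
        using agent.thp_xh[where \<sigma>=\<sigma> and i=i and g=g and t=t and Xh=Xh, OF ag[OF i] si[OF i] Xh_def[symmetric] xh t1 tm] .
    qed
    then show ?thesis unfolding qdef using nr by (simp add: field_simps)
  qed
  have ea: "SW n u Xh \<le> 2 * E"
  proof -
    have "(1/2) * SW n u Xh \<le> q Xh * SW n u Xh" using qxh SWnn[OF xh] by (intro mult_right_mono) auto
    then show ?thesis using Ege[OF xh] by linarith
  qed
  define bt where "bt i = agent.beta m (\<rho> i) (u i) t Xh" for i
  define th where "th = (\<Sum>i<n. bt i)"
  have btnn: "bt i \<ge> 0" if "i < n" for i unfolding bt_def using agent.beta_nn[OF ag[OF that]] .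
  have thnn: "th \<ge> 0" unfolding th_def using btnn by (intro sum_nonneg) auto
  define c where "c i Y = (index (\<rho> i) Y < t \<and> index (\<rho> i) Y < index (\<rho> i) Xh)" for i Y
  have eb: "(2 * H * real n * q X) * SW n u X \<le> 2 * H * real n * E"
  proof -
    have "(2 * H * real n) * (q X * SW n u X) \<le> (2 * H * real n) * E"
      using Ege[OF x] Hp nr by (intro mult_left_mono) auto
    then show ?thesis by (simp add: ac_simps)
  qed
  define W where "W Y = (\<Sum>i<n. if c i Y then u i Y else 0)" for Y
  have Wnn: "W Y \<ge> 0" if "Y < m" for Y unfolding W_def using unn that by (intro sum_nonneg) auto
  have qW: "q Y \<ge> (1 / (2 * H * real n)) * W Y" if Y: "Y < m" for Y
  proof -
    have "(\<Sum>i<n. (if c i Y then u i Y else 0) / (2 * H)) \<le> (\<Sum>i<n. P i Y)"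
    proof (intro sum_mono)
      fix i assume "i \<in> {..<n}"
      then have i: "i < n" by simp
      show "(if c i Y then u i Y else 0) / (2 * H) \<le> P i Y"
      proof (cases "c i Y")
        case True
        then show ?thesis unfolding P_def H_def c_def
          using agent.thp_b[where \<sigma>=\<sigma> and i=i and g=g and t=t and Xh=Xh, OF ag[OF i] si[OF i] Xh_def[symmetric] xh t1 tm Y]
          by simp
      qed (use Pnn[OF i] in simp)
    qed
    then have "W Y / (2 * H) \<le> (\<Sum>i<n. P i Y)" unfolding W_def by (simp add: sum_divide_distrib)
    then have "W Y / (2 * H) / real n \<le> (\<Sum>i<n. P i Y) / real n" using nr by (intro divide_right_mono) auto
    then show ?thesis unfolding qdef by (simp add: field_simps)
  qed
  have SWW: "SW n u Y \<ge> 1 * W Y" if Y: "Y < m" for Y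
    unfolding SW_def W_def using unn Y by (simp, intro sum_mono) auto
  have sumW: "(\<Sum>Y<m. W Y) = th"
  proof -
    have "(\<Sum>Y<m. W Y) = (\<Sum>i<n. \<Sum>Y<m. if c i Y then u i Y else 0)"
      unfolding W_def by (rule sum.swap)
    also have "\<dots> = (\<Sum>i<n. bt i)"
    proof (intro sum.cong refl)
      fix i assume "i \<in> {..<n}"
      then have i: "i < n" by simp
      show "(\<Sum>Y<m. if c i Y then u i Y else 0) = bt i"
        unfolding bt_def c_def using agent.beta_alt[OF ag[OF i], of t Xh] by simp
    qed
    finally show ?thesis unfolding th_def .
  qed
  have ec: "th^2 \<le> 2 * H * real n * real m * E"
  proof -
    have "(1 / (2 * H * real n)) * 1 * (\<Sum>Y<m. W Y)^2 / real m \<le> (\<Sum>Y<m. q Y * SW n u Y)"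
      using Hp nr m0 by (intro cs_lemma[OF qW SWW Wnn]) auto
    then have "th^2 / (2 * H * real n * real m) \<le> E" unfolding sumW Edef by (simp add: field_simps)
    then show ?thesis using Hp nr m0 by (simp add: divide_le_eq ac_simps)
  qed
  define V where "V Y = (\<Sum>i<n. if \<rho> i ! 0 = Y then 1 else 0 :: real)" for Y
  have Vnn: "V Y \<ge> 0" if "Y < m" for Y unfolding V_def by (intro sum_nonneg) auto
  have qV: "q Y \<ge> (1 / (2 * H * real n)) * V Y" if Y: "Y < m" for Y
  proof -
    have "(\<Sum>i<n. (if \<rho> i ! 0 = Y then 1 else 0) / (2 * H)) \<le> (\<Sum>i<n. P i Y)"
    proof (intro sum_mono)
      fix i assume "i \<in> {..<n}"
      then have i: "i < n" by simp
      show "(if \<rho> i ! 0 = Y then 1 else 0) / (2 * H) \<le> P i Y"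
      proof (cases "\<rho> i ! 0 = Y")
        case True
        then show ?thesis unfolding P_def H_def
          using agent.thp_top[where \<sigma>=\<sigma> and i=i and g=g and t=t and Xh=Xh, OF ag[OF i] si[OF i] Xh_def[symmetric] xh t1 tm]
          by simp
      qed (use Pnn[OF i] in simp)
    qed
    then have "V Y / (2 * H) \<le> (\<Sum>i<n. P i Y)" unfolding V_def by (simp add: sum_divide_distrib)
    then have "V Y / (2 * H) / real n \<le> (\<Sum>i<n. P i Y) / real n" using nr by (intro divide_right_mono) auto
    then show ?thesis unfolding qdef by (simp add: field_simps)
  qed
  have SWV: "SW n u Y \<ge> (1 / real m) * V Y" if Y: "Y < m" for Y
  proof -
    have "(\<Sum>i<n. (if \<rho> i ! 0 = Y then 1 else 0) / real m) \<le> (\<Sum>i<n. u i Y)"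
    proof (intro sum_mono)
      fix i assume "i \<in> {..<n}"
      then have i: "i < n" by simp
      show "(if \<rho> i ! 0 = Y then 1 else 0) / real m \<le> u i Y"
      proof (cases "\<rho> i ! 0 = Y")
        case True
        then show ?thesis using agent.top_bound[OF ag[OF i] m0] m0 by (simp add: divide_le_eq ac_simps)
      qed (use unn[OF i Y] in simp)
    qed
    then show ?thesis unfolding SW_def V_def by (simp add: sum_divide_distrib)
  qed
  have sumV: "(\<Sum>Y<m. V Y) = real n"
  proof -
    have "(\<Sum>Y<m. V Y) = (\<Sum>i<n. \<Sum>Y<m. if \<rho> i ! 0 = Y then 1 else 0 :: real)"
      unfolding V_def by (rule sum.swap)
    also have "\<dots> = (\<Sum>i<n. 1)"
    proof (intro sum.cong refl)
      fix i assume "i \<in> {..<n}"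
      then have i: "i < n" by simp
      have "\<rho> i ! 0 < m" using agent.nth_lt[OF ag[OF i] m0] .
      then show "(\<Sum>Y<m. if \<rho> i ! 0 = Y then 1 else 0 :: real) = 1"
        by (simp add: sum.delta)
    qed
    finally show ?thesis by simp
  qed
  have ed: "real n \<le> 2 * H * (real m)^2 * E"
  proof -
    have "(1 / (2 * H * real n)) * (1 / real m) * (\<Sum>Y<m. V Y)^2 / real m \<le> (\<Sum>Y<m. q Y * SW n u Y)"
      using Hp nr m0 by (intro cs_lemma[OF qV SWV Vnn]) auto
    then have "real n / (2 * H * (real m)^2) \<le> E" unfolding sumV Edef
      using nr by (simp add: field_simps power2_eq_square)
    then show ?thesis using Hp nr m0 by (simp add: divide_le_eq ac_simps)
  qed
  have ee: "real n \<le> (real m / real t) * th + real m * SW n u Xh"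
  proof -
    have "(\<Sum>i<n. (1::real)) \<le> (\<Sum>i<n. (real m / real t) * bt i + real m * u i Xh)"
    proof (intro sum_mono)
      fix i assume "i \<in> {..<n}"
      then have i: "i < n" by simp
      show "1 \<le> (real m / real t) * bt i + real m * u i Xh"
        unfolding bt_def using agent.e_bound[OF ag[OF i] t1 tm xh] .
    qed
    then show ?thesis unfolding th_def SW_def by (simp add: sum.distrib sum_distrib_left)
  qed
  have ef: "SW n u X \<le> SW n u Xh + th / real t + 2 * H * real n * q X"
  proof -
    have "(\<Sum>i<n. u i X) \<le> (\<Sum>i<n. u i Xh + bt i / real t + 2 * H * P i X)"
    proof (intro sum_mono)
      fix i assume "i \<in> {..<n}"
      then have i: "i < n" by simp
      have p0: "P i X \<ge> 0" using Pnn[OF i] .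
      have b0: "bt i / real t \<ge> 0" using btnn[OF i] by simp
      have u0: "u i Xh \<ge> 0" using unn[OF i xh] .
      show "u i X \<le> u i Xh + bt i / real t + 2 * H * P i X"
      proof (cases "c i X")
        case True
        have "P i X \<ge> u i X / (2 * H)" unfolding P_def H_def
          using True agent.thp_b[where \<sigma>=\<sigma> and i=i and g=g and t=t and Xh=Xh, OF ag[OF i] si[OF i] Xh_def[symmetric] xh t1 tm x]
          unfolding c_def by simp
        then have "u i X \<le> 2 * H * P i X" using Hp by (simp add: divide_le_eq ac_simps)
        then show ?thesis using b0 u0 by linarith
      next
        case False
        show ?thesis
        proof (cases "u i X \<le> u i Xh")
          case True
          then show ?thesis using b0 p0 Hp by (smt (verit) mult_nonneg_nonneg)
        next
          case F2: False
          have "real t * u i X \<le> bt i" unfolding bt_def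
            using agent.a1_bound[OF ag[OF i] x xh] False F2 unfolding c_def by simp
          then have "u i X \<le> bt i / real t" using t1 by (simp add: le_divide_eq ac_simps)
          then show ?thesis using u0 p0 Hp by (smt (verit) mult_nonneg_nonneg)
        qed
      qed
    qed
    moreover have "(\<Sum>i<n. 2 * H * P i X) = 2 * H * real n * q X"
    proof -
      have "2 * H * real n * q X = 2 * H * (\<Sum>i<n. P i X)" unfolding qdef using nr by simp
      then show ?thesis by (simp add: sum_distrib_left)
    qed
    ultimately show ?thesis unfolding SW_def th_def
      by (simp add: sum.distrib sum_divide_distrib)
  qed
  have main: "SW n u X \<le> 8 * (real m * sqrt (real m) * H / real t) * E"
    by (rule final_alg[OF nr _ _ H1 _ _ thnn _ Enn ea eb ec ed ee ef])
       (use t1 tm SWnn[OF x] SWnn[OF xh] Hp nr qnn[of X] in auto)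
  show "SW n u X \<le> 8 * (real m * sqrt (real m) * harm t / real t) * TH_expected_SW n m t g \<sigma> u"
    using main unfolding H_def E_def .
qed


end
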